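(* Let $N>2s$, $s\in(0,1)$, $\alpha\in(0,N)$, and let $V,f,g$ satisfy (V), (f), (g) below. Let $m(a):=\inf_{u\in S(a)}J(u)$ and $m_\infty(a):=\inf_{u\in S(a)}J_\infty(u)$. (1) If $\frac{N+\alpha}{N}=q<p<\frac{N+\alpha+2s}{N}$, then $m(a)\le m_\infty(a)$ for every $a>0$. (2) If $\frac{N+\alpha}{N}<q<p=\frac{N+\alpha+2s}{N}$, then $m(a)\le m_\infty(a)$ for every $0<a<a^*:=\left(\frac{p}{C_{\alpha,p}g_{max}^2}\right)^{\frac1{p-1}}$.
   Context: $I_\alpha(x)=A_\alpha|x|^{-(N-\alpha)}$, $A_\alpha=\frac{\Gamma(\frac{N-\alpha}{2})}{\Gamma(\frac{\alpha}{2})\pi^{N/2}2^\alpha}$, is the Riesz potential. $H^s(\mathbb{R}^N)=\{u\in L^2:(-\Delta)^{s/2}u\in L^2\}$, $\|u\|:=\|(-\Delta)^{s/2}u\|_2$, $S(a)=\{u\in H^s(\mathbb{R}^N):\int|u|^2dx=a\}$. (V) $V\in L^\infty(\mathbb{R}^N)$, $V_\infty:=\lim_{|x|\to\infty}V(x)$ exists, $0\le V(x)\le V_\infty$ for all $x$. (f) $f\in L^\infty$, $f_\infty:=\lim_{|x|\to\infty}f(x)$ exists, $0<f_\infty\le f(x)\le f_{max}$ for all $x$ (constant $f_{max}$). (g) $g\in L^\infty$, $g_\infty:=\lim_{|x|\to\infty}g(x)$ exists, $0<g_\infty\le g(x)\le g_{max}$ for all $x$ (constant $g_{max}$). $J(u)=\frac12\|u\|^2+\frac12\int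 V u^2dx-\frac1{2q}\int (I_\alpha*(f|u|^q))f|u|^qdx-\frac1{2p}\int (I_\alpha*(g|u|^p))g|u|^pdx$ and $J_\infty(u)=\frac12\|u\|^2+\frac{V_\infty}2\int u^2dx-\frac{f_\infty^2}{2q}\int (I_\alpha*|u|^q)|u|^qdx-\frac{g_\infty^2}{2p}\int (I_\alpha*|u|^p)|u|^pdx$. $C_{\alpha,p}$ (for $p=\frac{N+2s+\alpha}{N}$) is the optimal constant in $\int(I_\alpha*|u|^p)|u|^p\le C_{\alpha,p}\|u\|^{2}\|u\|_2^{2(p-1)}$ on $H^s(\mathbb{R}^N)$. *)

theory Defs
  imports "HOL-Analysis.Analysis"
begin

text \<open>Normalising constant C(N,s) of the fractional Laplacian (Fourier symbol of
  (-Delta)^s is |xi|^(2s)), so that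
  ||(-Delta)^(s/2) u||_2^2 = C(N,s)/2 * double integral of |u x - u y|^2/|x-y|^(N+2s).\<close>
definition frac_const :: "nat \<Rightarrow> real \<Rightarrow> real" where
  "frac_const N s = s * 4 powr s * Gamma ((real N + 2 * s) / 2) / (pi powr (real N / 2) * Gamma (1 - s))"

definition gagliardo_integrand :: "real \<Rightarrow> ('a::euclidean_space \<Rightarrow> real) \<Rightarrow> 'a \<times> 'a \<Rightarrow> real" where
  "gagliardo_integrand s u = (\<lambda>(x, y). (u x - u y)^2 / norm (x - y) powr (real DIM('a) + 2 * s))"

definition L2 :: "('a::euclidean_space \<Rightarrow> real) set" where
  "L2 = {u. u \<in> borel_measurable lborel \<and> integrable lborel (\<lambda>x. (u x)^2)}"

definition L2norm :: "('a::euclidean_space \<Rightarrow> real) \<Rightarrow> real" where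
  "L2norm u = sqrt (\<integral>x. (u x)^2 \<partial>lborel)"

text \<open>H^s(R^N) = {u in L^2 : (-Delta)^(s/2) u in L^2}\<close>
definition Hs :: "real \<Rightarrow> ('a::euclidean_space \<Rightarrow> real) set" where
  "Hs s = {u \<in> L2. integrable (lborel \<Otimes>\<^sub>M lborel) (gagliardo_integrand s u)}"

definition frac_norm :: "real \<Rightarrow> ('a::euclidean_space \<Rightarrow> real) \<Rightarrow> real" where
  "frac_norm s u = sqrt (frac_const DIM('a) s / 2 *
      (\<integral>z. gagliardo_integrand s u z \<partial>(lborel \<Otimes>\<^sub>M lborel)))"

definition riesz_const :: "nat \<Rightarrow> real \<Rightarrow> real" where
  "riesz_const N \<alpha> = Gamma ((real N - \<alpha>) / 2) / (Gamma (\<alpha> / 2) * pi powr (real N / 2) * 2 powr \<alpha>)"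

definition riesz :: "real \<Rightarrow> 'a::euclidean_space \<Rightarrow> real" where
  "riesz \<alpha> x = riesz_const DIM('a) \<alpha> * norm x powr (- (real DIM('a) - \<alpha>))"

definition choquard :: "real \<Rightarrow> ('a::euclidean_space \<Rightarrow> real) \<Rightarrow> real" where
  "choquard \<alpha> h = (\<integral>x. (\<integral>y. riesz \<alpha> (x - y) * h y \<partial>lborel) * h x \<partial>lborel)"

definition sphere_S :: "real \<Rightarrow> real \<Rightarrow> ('a::euclidean_space \<Rightarrow> real) set" where
  "sphere_S s a = {u \<in> Hs s. (\<integral>x. (u x)^2 \<partial>lborel) = a}"

definition energy_J :: "real \<Rightarrow> real \<Rightarrow> ('a::euclidean_space \<Rightarrow> real) \<Rightarrow> ('a \<Rightarrow> real) \<Rightarrow> ('a \<Rightarrow> real)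
    \<Rightarrow> real \<Rightarrow> real \<Rightarrow> ('a \<Rightarrow> real) \<Rightarrow> real" where
  "energy_J s \<alpha> V f g q p u =
     1/2 * (frac_norm s u)^2 + 1/2 * (\<integral>x. V x * (u x)^2 \<partial>lborel)
     - 1 / (2 * q) * choquard \<alpha> (\<lambda>x. f x * \<bar>u x\<bar> powr q)
     - 1 / (2 * p) * choquard \<alpha> (\<lambda>x. g x * \<bar>u x\<bar> powr p)"

definition energy_J_inf :: "real \<Rightarrow> real \<Rightarrow> real \<Rightarrow> real \<Rightarrow> real
    \<Rightarrow> real \<Rightarrow> real \<Rightarrow> ('a::euclidean_space \<Rightarrow> real) \<Rightarrow> real" where
  "energy_J_inf s \<alpha> Vinf finf ginf q p u =
     1/2 * (frac_norm s u)^2 + Vinf / 2 * (\<integral>x. (u x)^2 \<partial>lborel)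
     - finf^2 / (2 * q) * choquard \<alpha> (\<lambda>x. \<bar>u x\<bar> powr q)
     - ginf^2 / (2 * p) * choquard \<alpha> (\<lambda>x. \<bar>u x\<bar> powr p)"

definition opt_const :: "'a::euclidean_space itself \<Rightarrow> real \<Rightarrow> real \<Rightarrow> real \<Rightarrow> real" where
  "opt_const _ s \<alpha> p = Inf {C. \<forall>u \<in> (Hs s :: ('a \<Rightarrow> real) set).
      choquard \<alpha> (\<lambda>x. \<bar>u x\<bar> powr p) \<le> C * (frac_norm s u)^2 * (L2norm u) powr (2 * (p - 1))}"

end

theory Submission
  imports Defs
begin

lemma integral_sandwich:
  fixes F G :: "'b \<Rightarrow> real"
  assumes Fm: "F \<in> borel_measurable M" and Gm: "G \<in> borel_measurable M"
    and c: "0 < c" and b: "\<And>x. 0 \<le> c * G x \<and> c * G x \<le> F x \<and> F x \<le> D * G x"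
  shows "c * integral\<^sup>L M G \<le> integral\<^sup>L M F \<and> integral\<^sup>L M F \<le> D * integral\<^sup>L M G"
proof (cases "integrable M G")
  case True
  have G0: "\<And>x. 0 \<le> G x" using b c by (meson zero_le_mult_iff not_le less_le_not_le)
  have DI: "integrable M (\<lambda>x. D * G x)" using True by simp
  have nb: "\<And>x. norm (F x) \<le> norm (D * G x)" using b c G0
    by (smt (verit, best) real_norm_def)
  have FI: "integrable M F"
  proof (rule Bochner_Integration.integrable_bound[OF DI Fm])
    show "AE x in M. norm (F x) \<le> norm (D * G x)" using nb by simp
  qed
  have "integral\<^sup>L M (\<lambda>x. c * G x) \<le> integral\<^sup>L M F"
    using b FI True by (intro integral_mono) auto
  moreover have "integral\<^sup>L M F \<le> integral\<^sup>L M (\<lambda>x. D * G x)"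
    using b FI True by (intro integral_mono) auto
  ultimately show ?thesis by simp
next
  case False
  have G0: "\<And>x. 0 \<le> G x" using b c by (meson zero_le_mult_iff not_le less_le_not_le)
  have "\<not> integrable M F"
  proof
    assume FI: "integrable M F"
    have CI: "integrable M (\<lambda>x. (1/c) * F x)" using FI by simp
    have nb: "norm (G x) \<le> norm ((1/c) * F x)" for x
    proof -
      have "c * G x \<le> F x" using b by blast
      hence "G x \<le> F x / c" using c by (simp add: field_simps)
      thus ?thesis using G0[of x] c by (simp add: abs_if)
    qed
    have "integrable M G"
    proof (rule Bochner_Integration.integrable_bound[OF CI Gm])
      show "AE x in M. norm (G x) \<le> norm ((1/c) * F x)" using nb by simp
    qed
    with False show False by simp
  qed
  then show ?thesis using False by (simp add: not_integrable_integral_eq)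
qed

lemma riesz_nonneg:
  assumes "0 < \<alpha>" "\<alpha> < real DIM('a)"
  shows "0 \<le> riesz \<alpha> (x::'a::euclidean_space)"
  using assms unfolding riesz_def riesz_const_def by (auto intro!: mult_nonneg_nonneg divide_nonneg_pos)

lemma riesz_meas: "(\<lambda>z. riesz \<alpha> (z::'a::euclidean_space)) \<in> borel_measurable borel"
  unfolding riesz_def by measurable

lemma choquard_compare:
  fixes h w :: "'a::euclidean_space \<Rightarrow> real"
  assumes "0 < \<alpha>" "\<alpha> < real DIM('a)"
    and hm: "h \<in> borel_measurable lborel" and wm: "w \<in> borel_measurable lborel"
    and h0: "\<And>x. 0 \<le> h x" and c: "0 < c" and wb: "\<And>x. c \<le> w x \<and> w x \<le> D"
  shows "c^2 * choquard \<alpha> h \<le> choquard \<alpha> (\<lambda>x. w x * h x)"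
proof -
  have km: "(\<lambda>(x,y). riesz \<alpha> (x - y::'a)) \<in> borel_measurable (lborel \<Otimes>\<^sub>M lborel)"
  proof -
    have "(\<lambda>z::'a\<times>'a. fst z - snd z) \<in> borel_measurable (lborel \<Otimes>\<^sub>M lborel)" by measurable
    from measurable_compose[OF this riesz_meas[of \<alpha>]] show ?thesis
      by (simp add: case_prod_beta')
  qed
  define I where "I x = (\<integral>y. riesz \<alpha> (x - y) * h y \<partial>lborel)" for x
  define Iw where "Iw x = (\<integral>y. riesz \<alpha> (x - y) * (w y * h y) \<partial>lborel)" for x
  have Im: "I \<in> borel_measurable lborel" unfolding I_def
    using km hm by measurable
  have Iwm: "Iw \<in> borel_measurable lborel" unfolding Iw_def
    using km hm wm by measurable
  have I0: "0 \<le> I x" for x unfolding I_def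
    using riesz_nonneg[OF assms(1,2)] h0 by (intro integral_nonneg_AE) auto
  have inner: "c * I x \<le> Iw x \<and> Iw x \<le> D * I x" for x
    unfolding I_def Iw_def
  proof (rule integral_sandwich)
    show "(\<lambda>y. riesz \<alpha> (x - y) * (w y * h y)) \<in> borel_measurable lborel"
      using riesz_meas[of \<alpha>] hm wm by measurable
    show "(\<lambda>y. riesz \<alpha> (x - y) * h y) \<in> borel_measurable lborel"
      using riesz_meas[of \<alpha>] hm by measurable
    show "0 < c" by fact
    fix y
    have r: "0 \<le> riesz \<alpha> (x - y)" by (rule riesz_nonneg[OF assms(1,2)])
    show "0 \<le> c * (riesz \<alpha> (x - y) * h y) \<and>
          c * (riesz \<alpha> (x - y) * h y) \<le> riesz \<alpha> (x - y) * (w y * h y) \<and>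
          riesz \<alpha> (x - y) * (w y * h y) \<le> D * (riesz \<alpha> (x - y) * h y)"
    proof (intro conjI)
      show "0 \<le> c * (riesz \<alpha> (x - y) * h y)" using r h0[of y] c by simp
      have "c * (riesz \<alpha> (x - y) * h y) = riesz \<alpha> (x - y) * (c * h y)" by simp
      also have "\<dots> \<le> riesz \<alpha> (x - y) * (w y * h y)"
        using r h0[of y] wb[of y] by (intro mult_left_mono mult_right_mono) auto
      finally show "c * (riesz \<alpha> (x - y) * h y) \<le> riesz \<alpha> (x - y) * (w y * h y)" .
      have "riesz \<alpha> (x - y) * (w y * h y) \<le> riesz \<alpha> (x - y) * (D * h y)"
        using r h0[of y] wb[of y] by (intro mult_left_mono mult_right_mono) auto
      also have "\<dots> = D * (riesz \<alpha> (x - y) * h y)" by simp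
      finally show "riesz \<alpha> (x - y) * (w y * h y) \<le> D * (riesz \<alpha> (x - y) * h y)" .
    qed
  qed
  have "c^2 * (\<integral>x. I x * h x \<partial>lborel) \<le> (\<integral>x. Iw x * (w x * h x) \<partial>lborel) \<and>
        (\<integral>x. Iw x * (w x * h x) \<partial>lborel) \<le> D^2 * (\<integral>x. I x * h x \<partial>lborel)"
  proof (rule integral_sandwich)
    show "(\<lambda>x. Iw x * (w x * h x)) \<in> borel_measurable lborel" using Iwm hm wm by measurable
    show "(\<lambda>x. I x * h x) \<in> borel_measurable lborel" using Im hm by measurable
    show "0 < c^2" using c by simp
    fix x
    have a1: "c * I x \<le> Iw x" "Iw x \<le> D * I x" using inner[of x] by auto
    have a2: "c * h x \<le> w x * h x" "w x * h x \<le> D * h x" using wb[of x] h0[of x]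
      by (auto intro: mult_right_mono)
    have "0 \<le> Iw x" using a1(1) c I0[of x] by (smt (verit) mult_nonneg_nonneg)
    have "c^2 * (I x * h x) = (c * I x) * (c * h x)" by (simp add: power2_eq_square algebra_simps)
    also have "\<dots> \<le> Iw x * (w x * h x)"
      using a1 a2 c I0[of x] h0[of x] wb[of x] \<open>0 \<le> Iw x\<close> by (rule_tac mult_mono) auto
    finally have m1: "c^2 * (I x * h x) \<le> Iw x * (w x * h x)" .
    have "Iw x * (w x * h x) \<le> (D * I x) * (D * h x)"
      using a1 a2 c I0[of x] h0[of x] wb[of x] \<open>0 \<le> Iw x\<close> by (rule_tac mult_mono) auto
    also have "\<dots> = D^2 * (I x * h x)" by (simp add: power2_eq_square algebra_simps)
    finally show "0 \<le> c^2 * (I x * h x) \<and> c^2 * (I x * h x) \<le> Iw x * (w x * h x) \<and>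
        Iw x * (w x * h x) \<le> D^2 * (I x * h x)"
      using m1 I0[of x] h0[of x] by simp
  qed
  then show ?thesis unfolding choquard_def I_def Iw_def by simp
qed

lemma J_le:
  fixes V f g u :: "'a::euclidean_space \<Rightarrow> real"
  assumes "0 < \<alpha>" "\<alpha> < real DIM('a)" "0 < q" "0 < p"
    and V_meas: "V \<in> borel_measurable lborel"
    and V_bd: "\<forall>x. 0 \<le> V x \<and> V x \<le> Vinf"
    and f_meas: "f \<in> borel_measurable lborel"
    and f_bd: "0 < finf" "\<forall>x. finf \<le> f x \<and> f x \<le> fmax"
    and g_meas: "g \<in> borel_measurable lborel"
    and g_bd: "0 < ginf" "\<forall>x. ginf \<le> g x \<and> g x \<le> gmax"
    and u: "u \<in> sphere_S s a"
  shows "energy_J s \<alpha> V f g q p u \<le> energy_J_inf s \<alpha> Vinf finf ginf q p u"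
proof -
  have um: "u \<in> borel_measurable lborel" and ui: "integrable lborel (\<lambda>x. (u x)^2)"
    using u unfolding sphere_S_def Hs_def L2_def by auto
  have Vi: "integrable lborel (\<lambda>x. Vinf * (u x)^2)" using ui by simp
  have VI: "integrable lborel (\<lambda>x. V x * (u x)^2)"
  proof (rule Bochner_Integration.integrable_bound[OF Vi])
    show "(\<lambda>x. V x * (u x)\<^sup>2) \<in> borel_measurable lborel" using V_meas um by measurable
    show "AE x in lborel. norm (V x * (u x)\<^sup>2) \<le> norm (Vinf * (u x)\<^sup>2)"
    proof (rule AE_I2)
      fix x
      have "V x * (u x)^2 \<le> Vinf * (u x)^2" using V_bd by (auto intro!: mult_right_mono)
      thus "norm (V x * (u x)\<^sup>2) \<le> norm (Vinf * (u x)\<^sup>2)" using V_bd[rule_format, of x]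
        by (simp add: abs_mult)
    qed
  qed
  have "(\<integral>x. V x * (u x)^2 \<partial>lborel) \<le> (\<integral>x. Vinf * (u x)^2 \<partial>lborel)"
    using VI Vi V_bd by (intro integral_mono) (auto intro!: mult_right_mono)
  hence Vle: "(\<integral>x. V x * (u x)^2 \<partial>lborel) \<le> Vinf * (\<integral>x. (u x)^2 \<partial>lborel)" by simp
  have cf: "finf^2 * choquard \<alpha> (\<lambda>x. \<bar>u x\<bar> powr q) \<le> choquard \<alpha> (\<lambda>x. f x * \<bar>u x\<bar> powr q)"
    using assms(1,2) f_meas f_bd um by (intro choquard_compare[where D=fmax]) auto
  have cg: "ginf^2 * choquard \<alpha> (\<lambda>x. \<bar>u x\<bar> powr p) \<le> choquard \<alpha> (\<lambda>x. g x * \<bar>u x\<bar> powr p)"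
    using assms(1,2) g_meas g_bd um by (intro choquard_compare[where D=gmax]) auto
  have 1: "1 / (2 * q) * (finf^2 * choquard \<alpha> (\<lambda>x. \<bar>u x\<bar> powr q)) \<le> 1 / (2 * q) * choquard \<alpha> (\<lambda>x. f x * \<bar>u x\<bar> powr q)"
    using cf assms(3) by (intro mult_left_mono) auto
  have 2: "1 / (2 * p) * (ginf^2 * choquard \<alpha> (\<lambda>x. \<bar>u x\<bar> powr p)) \<le> 1 / (2 * p) * choquard \<alpha> (\<lambda>x. g x * \<bar>u x\<bar> powr p)"
    using cg assms(4) by (intro mult_left_mono) auto
  show ?thesis unfolding energy_J_def energy_J_inf_def using Vle 1 2 by simp
qed

theorem lemma2p5:
  fixes V f g :: "'a::euclidean_space \<Rightarrow> real"
    and s \<alpha> p q Vinf finf ginf fmax gmax :: real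
  assumes "0 < s" and "s < 1" and "2 * s < real DIM('a)"
    and "0 < \<alpha>" and "\<alpha> < real DIM('a)"
    and V_meas: "V \<in> borel_measurable lborel" and V_lim: "(V \<longlongrightarrow> Vinf) at_infinity"
    and V_bd: "\<forall>x. 0 \<le> V x \<and> V x \<le> Vinf"
    and f_meas: "f \<in> borel_measurable lborel" and f_lim: "(f \<longlongrightarrow> finf) at_infinity"
    and f_bd: "0 < finf" "\<forall>x. finf \<le> f x \<and> f x \<le> fmax"
    and g_meas: "g \<in> borel_measurable lborel" and g_lim: "(g \<longlongrightarrow> ginf) at_infinity"
    and g_bd: "0 < ginf" "\<forall>x. ginf \<le> g x \<and> g x \<le> gmax"
  shows
    "(q = (real DIM('a) + \<alpha>) / real DIM('a) \<and> q < p \<and> p < (real DIM('a) + \<alpha> + 2 * s) / real DIM('a)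
       \<longrightarrow> (\<forall>a > 0.
             (INF u \<in> (sphere_S s a :: ('a \<Rightarrow> real) set). ereal (energy_J s \<alpha> V f g q p u))
           \<le> (INF u \<in> (sphere_S s a :: ('a \<Rightarrow> real) set). ereal (energy_J_inf s \<alpha> Vinf finf ginf q p u))))
     \<and> ((real DIM('a) + \<alpha>) / real DIM('a) < q \<and> q < p \<and> p = (real DIM('a) + \<alpha> + 2 * s) / real DIM('a)
       \<longrightarrow> (\<forall>a. 0 < a \<and> a < (p / (opt_const TYPE('a) s \<alpha> p * gmax^2)) powr (1 / (p - 1)) \<longrightarrow>
             (INF u \<in> (sphere_S s a :: ('a \<Rightarrow> real) set). ereal (energy_J s \<alpha> V f g q p u))
           \<le> (INF u \<in> (sphere_S s a :: ('a \<Rightarrow> real) set). ereal (energy_J_inf s \<alpha> Vinf finf ginf q p u))))"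
proof -
  have pos: "0 < (real DIM('a) + \<alpha>) / real DIM('a)" using assms(4) by simp
  have main: "(INF u \<in> (sphere_S s a :: ('a \<Rightarrow> real) set). ereal (energy_J s \<alpha> V f g q p u))
           \<le> (INF u \<in> (sphere_S s a :: ('a \<Rightarrow> real) set). ereal (energy_J_inf s \<alpha> Vinf finf ginf q p u))"
    if "0 < q" "q < p" for a
  proof (rule INF_mono)
    fix u assume "u \<in> (sphere_S s a :: ('a \<Rightarrow> real) set)"
    then show "\<exists>m\<in>sphere_S s a. ereal (energy_J s \<alpha> V f g q p m) \<le> ereal (energy_J_inf s \<alpha> Vinf finf ginf q p u)"
    proof (intro bexI[of _ u])
      have "0 < p" using that by simp
      from J_le[OF assms(4,5) that(1) this V_meas V_bd f_meas f_bd g_meas g_bd \<open>u \<in> sphere_S s a\<close>]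
      show "ereal (energy_J s \<alpha> V f g q p u) \<le> ereal (energy_J_inf s \<alpha> Vinf finf ginf q p u)" by simp
    qed simp
  qed
  show ?thesis using main pos by (smt (verit))
qed

end
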